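(* Let $\mathcal C_1,\mathcal C_2$ be normal rational curves in $\mathrm{PG}(N,q)$ spanning disjoint subspaces, and let $\mathcal C_1^*,\mathcal C_2^*$ be their $\mathbb{F}_{q^n}$-extensions in $\mathrm{PG}(N,q^n)$. Let $P\in\mathcal C_1^*\setminus\mathcal C_1$ and $Q\in\mathcal C_2^*\setminus\mathcal C_2$, with $P$ not contained in the $\mathbb{F}_{q^2}$-extension of $\mathcal C_1$. Then there is at most one normal rational scroll $S^*$ of $\mathrm{PG}(N,q^n)$ defined by $\mathcal C_1^*,\mathcal C_2^*$ that contains the line $\langle P,Q\rangle$ and is the $\mathbb{F}_{q^n}$-extension of a normal rational scroll of $\mathrm{PG}(N,q)$ defined by $\mathcal C_1,\mathcal C_2$. Moreover, if such a scroll exists, it contains the lines $\langle P^{\sigma^i},Q^{\sigma^i}\rangle$ for every $i$.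
   Context: $\mathrm{PG}(N,q)$ is embedded in $\mathrm{PG}(N,q^n)$ as the set of points with coordinates in $\mathbb{F}_q$ (up to scalar), and $\sigma$ is the collineation of $\mathrm{PG}(N,q^n)$ raising all coordinates to the $q$-th power, so $\mathrm{PG}(N,q)$ is the set of $\sigma$-fixed points. A normal rational curve of degree $d$ ($1\le d\le q$) in $\mathrm{PG}(N,q)$ is the image of a map $\rho:\mathrm{PG}(1,q)\to\mathrm{PG}(N,q)$, $(s,t)_{\mathbb{F}_q}\mapsto(\sum_{i=0}^d s^{d-i}t^ie_i)_{\mathbb{F}_q}$, for linearly independent vectors $e_0,\dots,e_d$; its $\mathbb{F}_{q^j}$-extension ($j\mid n$) is the image of the same formula with $(s,t)$ ranging over $\mathbb{F}_{q^j}^2\setminus\{0\}$. Given normal rational curves $\mathcal C_1=\mathrm{Im}(\rho_1)$ and $\mathcal C_2=\mathrm{Im}(\rho_2)$ spanning disjoint subspaces, a normal rational scroll defined by $\mathcal C_1,\mathcal C_2$ is a set of lines $\{\langle\rho_1(X),\rho_2(\psi(X))\rangle:X\in\mathrm{PG}(1,q)\}$ for some $\psi\in\mathrm{PGL}(2,q)$ (this family does not depend on the choice of parametrisations $\rho_i$). Its $\mathbb{F}_{q^n}$-extension is $\{\langle\rho_1^*(X),\rho_2^*(\psi^*(X))\rangle:X\in\mathrm{PG}(1,q^n)\}$, where $\rho_i^*,\psi^*$ are the same formulas over $\mathbb{F}_{q^n}$; a normal rational scroll of $\mathrm{PG}(N,q^n)$ defined by $\mathcal C_1^*,\mathcal C_2^*$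 is defined analogously with $\psi\in\mathrm{PGL}(2,q^n)$. *)

theory Defs
  imports "HOL-Computational_Algebra.Primes"
begin

text \<open>Model: the field F_{q^n} is a finite field type 'a with CARD('a) = q^n,
  q a prime power.  Vectors of the underlying space of PG(N,q^n) are functions
  'm => 'a for a finite coordinate type 'm (so N+1 = CARD('m)).  Projective
  subspaces are represented by their underlying vector subspaces (sets of vectors).\<close>

definition subfield_pow :: "nat \<Rightarrow> nat \<Rightarrow> ('a::field) set" where
  "subfield_pow q j = {x. x ^ (q ^ j) = x}"

abbreviation GFq :: "nat \<Rightarrow> ('a::field) set" where
  "GFq q \<equiv> subfield_pow q 1"

definition pt :: "('m \<Rightarrow> 'a::field) \<Rightarrow> ('m \<Rightarrow> 'a) set" where
  "pt v = {(\<lambda>k. c * v k) | c. True}"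

definition pline :: "('m \<Rightarrow> 'a::field) set \<Rightarrow> ('m \<Rightarrow> 'a) set \<Rightarrow> ('m \<Rightarrow> 'a) set" where
  "pline A B = {(\<lambda>k. x k + y k) | x y. x \<in> A \<and> y \<in> B}"

text \<open>The collineation sigma^i (coordinates raised to the power q^i) applied to a subspace.\<close>
definition frob :: "nat \<Rightarrow> nat \<Rightarrow> ('m \<Rightarrow> 'a::field) set \<Rightarrow> ('m \<Rightarrow> 'a) set" where
  "frob q i A = (\<lambda>v k. v k ^ (q ^ i)) ` A"

definition rho :: "nat \<Rightarrow> (nat \<Rightarrow> 'm \<Rightarrow> 'a::field) \<Rightarrow> 'a \<Rightarrow> 'a \<Rightarrow> 'm \<Rightarrow> 'a" where
  "rho d e s t = (\<lambda>k. \<Sum>i\<le>d. s ^ (d - i) * t ^ i * e i k)"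

definition span_over :: "'a set \<Rightarrow> nat \<Rightarrow> (nat \<Rightarrow> 'm \<Rightarrow> 'a::field) \<Rightarrow> ('m \<Rightarrow> 'a) set" where
  "span_over K d e = {(\<lambda>k. \<Sum>i\<le>d. c i * e i k) | c. \<forall>i\<le>d. c i \<in> K}"

text \<open>e_0..e_d are the data of a normal rational curve of degree d of PG(N,q):
  1 <= d <= q, vectors with coordinates in F_q, linearly independent over F_q.\<close>
definition nrc_data :: "nat \<Rightarrow> nat \<Rightarrow> (nat \<Rightarrow> 'm \<Rightarrow> 'a::field) \<Rightarrow> bool" where
  "nrc_data q d e \<longleftrightarrow> 1 \<le> d \<and> d \<le> q \<and>
     (\<forall>i\<le>d. \<forall>k. e i k \<in> GFq q) \<and>
     (\<forall>c. (\<forall>i\<le>d. c i \<in> GFq q) \<longrightarrow> (\<lambda>k. \<Sum>i\<le>d. c i * e i k) = (\<lambda>k. 0)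
          \<longrightarrow> (\<forall>i\<le>d. c i = 0))"

text \<open>The K-extension of the curve Im(rho) (for K = F_q this is the curve itself,
  for K = UNIV the F_{q^n}-extension): the points rho(s,t), (s,t) in K^2 - {0}.\<close>
definition curve_ext :: "'a set \<Rightarrow> nat \<Rightarrow> (nat \<Rightarrow> 'm \<Rightarrow> 'a::field) \<Rightarrow> ('m \<Rightarrow> 'a) set set" where
  "curve_ext K d e = {pt (rho d e s t) | s t. s \<in> K \<and> t \<in> K \<and> (s, t) \<noteq> (0, 0)}"

text \<open>S is the set of lines <rho1(X), rho2(psi(X))>, X ranging over PG(1,K), for some
  psi in PGL(2,L) (matrix entries in L, nonzero determinant).
  With K = UNIV, L = UNIV: a normal rational scroll of PG(N,q^n) defined by C1*, C2*.
  With K = UNIV, L = F_q: the F_{q^n}-extension of a normal rational scroll of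
  PG(N,q) defined by C1, C2.\<close>
definition scroll_over ::
  "'a set \<Rightarrow> 'a set \<Rightarrow> nat \<Rightarrow> (nat \<Rightarrow> 'm \<Rightarrow> 'a::field) \<Rightarrow> nat \<Rightarrow> (nat \<Rightarrow> 'm \<Rightarrow> 'a)
     \<Rightarrow> ('m \<Rightarrow> 'a) set set \<Rightarrow> bool" where
  "scroll_over K L d1 e d2 f S \<longleftrightarrow>
     (\<exists>a b c d. a \<in> L \<and> b \<in> L \<and> c \<in> L \<and> d \<in> L \<and> a * d - b * c \<noteq> 0 \<and>
        S = {pline (pt (rho d1 e s t)) (pt (rho d2 f (a * s + b * t) (c * s + d * t))) | s t.
               s \<in> K \<and> t \<in> K \<and> (s, t) \<noteq> (0, 0)})"

definition good_scroll ::
  "nat \<Rightarrow> nat \<Rightarrow> (nat \<Rightarrow> 'm \<Rightarrow> 'a::field) \<Rightarrow> nat \<Rightarrow> (nat \<Rightarrow> 'm \<Rightarrow> 'a)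
     \<Rightarrow> ('m \<Rightarrow> 'a) set set \<Rightarrow> bool" where
  "good_scroll q d1 e d2 f S \<longleftrightarrow>
     scroll_over UNIV UNIV d1 e d2 f S \<and> scroll_over UNIV (GFq q) d1 e d2 f S"

end

theory Submission
  imports Defs "HOL-Number_Theory.Residues"
begin

lemma char_eq:
  fixes p m :: nat
  assumes "prime p" "card (UNIV :: ('a::{field,finite}) set) = p ^ m"
  shows "CHAR('a) = p"
proof -
  have pos: "CHAR('a) > 0" by (rule finite_imp_CHAR_pos) simp
  have pr: "prime CHAR('a)" using prime_CHAR_semidom[OF pos] .
  have "CHAR('a) dvd p ^ m" using CHAR_dvd_CARD[where 'a='a] assms(2) by simp
  hence "CHAR('a) dvd p" using pr prime_dvd_power by blast
  thus ?thesis using pr assms(1) primes_dvd_imp_eq by blast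
qed

context
  fixes Q :: nat and j :: nat
  assumes QC: "Q = CHAR('a::{field,finite}) ^ j"
begin

lemma fr_prime: "prime CHAR('a)"
  using prime_CHAR_semidom[OF finite_imp_CHAR_pos[where 'a='a]] by simp

lemma fr_add: "((x::'a) + y) ^ Q = x ^ Q + y ^ Q"
  using freshmans_dream'[OF fr_prime QC] .

lemma fr_sum: "(sum (g :: 'b \<Rightarrow> 'a) A) ^ Q = sum (\<lambda>i. g i ^ Q) A"
  using freshmans_dream_sum'[OF fr_prime QC] .

lemma fr_pos: "Q > 0" using QC fr_prime prime_gt_0_nat by simp

lemma fr_zero: "(x::'a) ^ Q = 0 \<longleftrightarrow> x = 0"
  using fr_pos by simp

lemma fr_neg: "(- (x::'a)) ^ Q = - (x ^ Q)"
proof -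
  have "(x + (-x)) ^ Q = x ^ Q + (-x) ^ Q" by (rule fr_add)
  hence "x ^ Q + (-x) ^ Q = 0" using fr_pos by (simp add: power_0_left)
  thus ?thesis by (simp add: eq_neg_iff_add_eq_0 add.commute)
qed

lemma fr_diff: "((x::'a) - y) ^ Q = x ^ Q - y ^ Q"
  using fr_add[of x "-y"] fr_neg[of y] by simp

lemma fr_inj: "(x::'a) ^ Q = y ^ Q \<longleftrightarrow> x = y"
  using fr_diff[of x y] fr_zero[of "x - y"] by auto

lemma fr_surj: "\<exists>y::'a. y ^ Q = x"
proof -
  have "inj (\<lambda>y::'a. y ^ Q)" using fr_inj by (auto intro: injI)
  hence "surj (\<lambda>y::'a. y ^ Q)" using endo_inj_surj[of UNIV "\<lambda>y::'a. y ^ Q"] by simp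
  thus ?thesis by (metis surjD)
qed

end

lemma indep_ext:
  fixes g :: "'b \<Rightarrow> 'm \<Rightarrow> 'a::{field,finite}"
  assumes QC: "Q = CHAR('a) ^ j"
    and fin: "finite J"
    and gq: "\<forall>l\<in>J. \<forall>k. g l k ^ Q = g l k"
    and ind: "\<forall>c. (\<forall>l\<in>J. c l ^ Q = c l) \<longrightarrow> (\<lambda>k. \<Sum>l\<in>J. c l * g l k) = (\<lambda>k. 0) \<longrightarrow> (\<forall>l\<in>J. c l = 0)"
    and rel: "(\<lambda>k. \<Sum>l\<in>J. c l * g l k) = (\<lambda>k. 0)"
  shows "\<forall>l\<in>J. c l = 0"
proof -
  have main: "\<forall>c. card {l\<in>J. c l \<noteq> 0} = N \<longrightarrow> (\<lambda>k. \<Sum>l\<in>J. c l * g l k) = (\<lambda>k. 0) \<longrightarrow> (\<forall>l\<in>J. c l = 0)" for N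
  proof (induction N rule: less_induct)
    case (less N)
    show ?case
    proof (intro allI impI)
      fix c :: "'b \<Rightarrow> 'a"
      assume cN: "card {l\<in>J. c l \<noteq> 0} = N" and rel: "(\<lambda>k. \<Sum>l\<in>J. c l * g l k) = (\<lambda>k. 0)"
      show "\<forall>l\<in>J. c l = 0"
      proof (rule ccontr)
        assume "\<not> (\<forall>l\<in>J. c l = 0)"
        then obtain l0 where l0: "l0 \<in> J" "c l0 \<noteq> 0" by auto
        define c' where "c' l = c l / c l0" for l
        have rel1: "(\<Sum>l\<in>J. c l * g l k) = 0" for k using rel by meson
        have rel': "(\<Sum>l\<in>J. c' l * g l k) = 0" for k
        proof -
          have "(\<Sum>l\<in>J. c' l * g l k) = (\<Sum>l\<in>J. c l * g l k) / c l0"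
            by (simp add: c'_def sum_divide_distrib)
          thus ?thesis using rel1 by simp
        qed
        have rel'': "(\<Sum>l\<in>J. c' l ^ Q * g l k) = 0" for k
        proof -
          have "(\<Sum>l\<in>J. c' l * g l k) ^ Q = (\<Sum>l\<in>J. (c' l * g l k) ^ Q)"
            by (rule fr_sum[OF QC])
          also have "\<dots> = (\<Sum>l\<in>J. c' l ^ Q * g l k)"
            using gq by (intro sum.cong) (auto simp: power_mult_distrib)
          finally show ?thesis using rel' fr_pos[OF QC] by (simp add: power_0_left)
        qed
        define d where "d l = c' l ^ Q - c' l" for l
        have reld: "(\<lambda>k. \<Sum>l\<in>J. d l * g l k) = (\<lambda>k. 0)"
        proof
          fix k
          have "(\<Sum>l\<in>J. d l * g l k) = (\<Sum>l\<in>J. c' l ^ Q * g l k) - (\<Sum>l\<in>J. c' l * g l k)"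
            by (simp add: d_def left_diff_distrib sum_subtractf)
          thus "(\<Sum>l\<in>J. d l * g l k) = 0" using rel' rel'' by simp
        qed
        have sub: "{l\<in>J. d l \<noteq> 0} \<subseteq> {l\<in>J. c l \<noteq> 0} - {l0}"
        proof
          fix l assume "l \<in> {l\<in>J. d l \<noteq> 0}"
          hence l: "l \<in> J" "d l \<noteq> 0" by auto
          have "l \<noteq> l0" using l(2) l0(2) fr_pos[OF QC] by (auto simp: d_def c'_def)
          moreover have "c l \<noteq> 0" using l(2) fr_pos[OF QC] by (auto simp: d_def c'_def power_0_left)
          ultimately show "l \<in> {l\<in>J. c l \<noteq> 0} - {l0}" using l by auto
        qed
        have "card {l\<in>J. d l \<noteq> 0} \<le> card ({l\<in>J. c l \<noteq> 0} - {l0})"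
          using sub fin by (intro card_mono) auto
        also have "\<dots> < card {l\<in>J. c l \<noteq> 0}"
          using fin l0 by (intro card_Diff1_less) auto
        finally have "card {l\<in>J. d l \<noteq> 0} < N" using cN by simp
        hence "\<forall>l\<in>J. d l = 0" using less reld by blast
        hence "\<forall>l\<in>J. c' l ^ Q = c' l" by (auto simp: d_def)
        moreover have "(\<lambda>k. \<Sum>l\<in>J. c' l * g l k) = (\<lambda>k. 0)" using rel' by auto
        ultimately have "\<forall>l\<in>J. c' l = 0" using ind by blast
        moreover have "c' l0 = 1" using l0 by (simp add: c'_def)
        ultimately show False using l0 by auto
      qed
    qed
  qed
  show ?thesis using main rel by blast
qed

lemma sum_plus_img:
  assumes "finite A" "finite B"
  shows "(\<Sum>l\<in>Inl ` A \<union> Inr ` B. h l) = (\<Sum>i\<in>A. h (Inl i)) + (\<Sum>j\<in>B. h (Inr j))"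
proof -
  have "(\<Sum>l\<in>Inl ` A \<union> Inr ` B. h l) = (\<Sum>l\<in>Inl ` A. h l) + (\<Sum>l\<in>Inr ` B. h l)"
    using assms by (intro sum.union_disjoint) auto
  also have "(\<Sum>l\<in>Inl ` A. h l) = (\<Sum>i\<in>A. h (Inl i))" by (simp add: sum.reindex)
  also have "(\<Sum>l\<in>Inr ` B. h l) = (\<Sum>j\<in>B. h (Inr j))" by (simp add: sum.reindex)
  finally show ?thesis .
qed

lemma GFq_iff: "x \<in> GFq q \<longleftrightarrow> x ^ q = x"
  by (simp add: subfield_pow_def)

lemma GFq_iff': "x \<in> subfield_pow q (Suc 0) \<longleftrightarrow> x ^ q = x"
  by (simp add: subfield_pow_def)

lemma direct_sum:
  fixes e f :: "nat \<Rightarrow> 'm \<Rightarrow> 'a::{field,finite}"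
  assumes QC: "q = CHAR('a) ^ j"
    and ne: "nrc_data q d1 e" and nf: "nrc_data q d2 f"
    and disj: "span_over (GFq q) d1 e \<inter> span_over (GFq q) d2 f = {(\<lambda>k. 0)}"
    and rel: "\<forall>k. (\<Sum>i\<le>d1. a i * e i k) + (\<Sum>j\<le>d2. b j * f j k) = 0"
  shows "(\<forall>i\<le>d1. a i = 0) \<and> (\<forall>j\<le>d2. b j = 0)"
proof -
  define J where "J = Inl ` {..d1} \<union> Inr ` {..d2}"
  define g where "g = case_sum e f"
  have fin: "finite J" by (simp add: J_def)
  have sJ: "(\<Sum>l\<in>J. c l * g l k) = (\<Sum>i\<le>d1. c (Inl i) * e i k) + (\<Sum>j\<le>d2. c (Inr j) * f j k)"
    for c :: "nat + nat \<Rightarrow> 'a" and k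
    unfolding J_def g_def by (subst sum_plus_img) auto
  have gq: "\<forall>l\<in>J. \<forall>k. g l k ^ q = g l k"
    using ne nf by (auto simp: J_def g_def nrc_data_def GFq_iff')
  have ind: "\<forall>c. (\<forall>l\<in>J. c l ^ q = c l) \<longrightarrow> (\<lambda>k. \<Sum>l\<in>J. c l * g l k) = (\<lambda>k. 0) \<longrightarrow> (\<forall>l\<in>J. c l = 0)"
  proof (intro allI impI)
    fix c :: "nat + nat \<Rightarrow> 'a"
    assume cq: "\<forall>l\<in>J. c l ^ q = c l" and r: "(\<lambda>k. \<Sum>l\<in>J. c l * g l k) = (\<lambda>k. 0)"
    define v where "v = (\<lambda>k. \<Sum>i\<le>d1. c (Inl i) * e i k)"
    have r': "(\<Sum>i\<le>d1. c (Inl i) * e i k) + (\<Sum>j\<le>d2. c (Inr j) * f j k) = 0" for k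
      using fun_cong[OF r, of k] sJ[of c k] by simp
    have v1: "v \<in> span_over (GFq q) d1 e"
      unfolding span_over_def v_def using cq by (auto simp: J_def GFq_iff' intro!: exI[of _ "\<lambda>i. c (Inl i)"])
    have v2: "v \<in> span_over (GFq q) d2 f"
    proof -
      have "v k = (\<Sum>j\<le>d2. (- c (Inr j)) * f j k)" for k
      proof -
        have h: "(\<Sum>j\<le>d2. (- c (Inr j)) * f j k) = - (\<Sum>j\<le>d2. c (Inr j) * f j k)"
          by (simp add: sum_negf[symmetric])
        have a: "v k + (\<Sum>j\<le>d2. c (Inr j) * f j k) = 0" unfolding v_def by (rule r')
        have "v k = - (\<Sum>j\<le>d2. c (Inr j) * f j k)" using a by (rule eq_neg_iff_add_eq_0[THEN iffD2])
        thus ?thesis unfolding h .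
      qed
      hence vv: "v = (\<lambda>k. \<Sum>j\<le>d2. (- c (Inr j)) * f j k)" by (rule ext)
      have gg: "\<forall>j\<le>d2. - c (Inr j) \<in> GFq q"
        using cq fr_neg[OF QC] by (auto simp: J_def GFq_iff')
      show ?thesis unfolding span_over_def mem_Collect_eq
        by (intro exI[of _ "\<lambda>j. - c (Inr j)"] conjI vv gg)
    qed
    have "v \<in> span_over (GFq q) d1 e \<inter> span_over (GFq q) d2 f" using v1 v2 by (rule IntI)
    hence v0: "v = (\<lambda>k. 0)" unfolding disj by simp
    have ie: "\<forall>c. (\<forall>i\<le>d1. c i \<in> GFq q) \<longrightarrow> (\<lambda>k. \<Sum>i\<le>d1. c i * e i k) = (\<lambda>k. 0) \<longrightarrow> (\<forall>i\<le>d1. c i = 0)"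
      using ne unfolding nrc_data_def by blast
    have ifq: "\<forall>c. (\<forall>i\<le>d2. c i \<in> GFq q) \<longrightarrow> (\<lambda>k. \<Sum>i\<le>d2. c i * f i k) = (\<lambda>k. 0) \<longrightarrow> (\<forall>i\<le>d2. c i = 0)"
      using nf unfolding nrc_data_def by blast
    have g1: "\<forall>i\<le>d1. c (Inl i) \<in> GFq q" using cq by (simp add: J_def GFq_iff')
    have v0': "(\<lambda>k. \<Sum>i\<le>d1. c (Inl i) * e i k) = (\<lambda>k. 0)" using v0 unfolding v_def .
    have c1: "\<forall>i\<le>d1. c (Inl i) = 0"
      using mp[OF mp[OF spec[OF ie, of "\<lambda>i. c (Inl i)"] g1] v0'] .
    have w0: "(\<lambda>k. \<Sum>j\<le>d2. c (Inr j) * f j k) = (\<lambda>k. 0)"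
    proof
      fix k
      have "(\<Sum>i\<le>d1. c (Inl i) * e i k) = 0" using fun_cong[OF v0', of k] by simp
      thus "(\<Sum>j\<le>d2. c (Inr j) * f j k) = 0" using r'[of k] by simp
    qed
    have g2: "\<forall>j\<le>d2. c (Inr j) \<in> GFq q" using cq by (simp add: J_def GFq_iff')
    have c2: "\<forall>j\<le>d2. c (Inr j) = 0"
      using mp[OF mp[OF spec[OF ifq, of "\<lambda>i. c (Inr i)"] g2] w0] .
    show "\<forall>l\<in>J. c l = 0" using c1 c2 by (auto simp: J_def)
  qed
  define c where "c = case_sum a b"
  have "(\<lambda>k. \<Sum>l\<in>J. c l * g l k) = (\<lambda>k. 0)"
  proof
    fix k
    have "(\<Sum>l\<in>J. c l * g l k) = (\<Sum>i\<le>d1. a i * e i k) + (\<Sum>j\<le>d2. b j * f j k)"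
      using sJ[of c k] by (simp add: c_def)
    thus "(\<Sum>l\<in>J. c l * g l k) = 0" using rel by simp
  qed
  hence "\<forall>l\<in>J. c l = 0" using indep_ext[OF QC fin gq ind] by blast
  hence "\<forall>i\<in>{..d1}. c (Inl i) = 0" "\<forall>j\<in>{..d2}. c (Inr j) = 0" by (auto simp: J_def)
  thus ?thesis by (simp add: c_def)
qed

lemma rho_scale: "rho d e (l * s) (l * t) = (\<lambda>k. l ^ d * rho d e s t k)"
proof
  fix k
  have "rho d e (l * s) (l * t) k = (\<Sum>i\<le>d. l ^ d * (s ^ (d - i) * t ^ i * e i k))"
    unfolding rho_def
  proof (intro sum.cong refl)
    fix i assume "i \<in> {..d}"
    hence "d - i + i = d" by simp
    hence "l ^ (d - i) * l ^ i = l ^ d" by (metis power_add)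
    thus "(l * s) ^ (d - i) * (l * t) ^ i * e i k = l ^ d * (s ^ (d - i) * t ^ i * e i k)"
      by (simp add: power_mult_distrib algebra_simps)
  qed
  also have "\<dots> = l ^ d * rho d e s t k" by (simp add: rho_def sum_distrib_left)
  finally show "rho d e (l * s) (l * t) k = l ^ d * rho d e s t k" .
qed

lemma pt_scale:
  assumes "(c::'a::field) \<noteq> 0"
  shows "pt (\<lambda>k. c * v k) = pt v"
proof
  show "pt (\<lambda>k. c * v k) \<subseteq> pt v"
  proof
    fix x assume "x \<in> pt (\<lambda>k. c * v k)"
    then obtain b where "x = (\<lambda>k. b * (c * v k))" unfolding pt_def by blast
    hence "x = (\<lambda>k. (b * c) * v k)" by (simp add: mult.assoc)
    thus "x \<in> pt v" unfolding pt_def by blast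
  qed
  show "pt v \<subseteq> pt (\<lambda>k. c * v k)"
  proof
    fix x assume "x \<in> pt v"
    then obtain b where "x = (\<lambda>k. b * v k)" unfolding pt_def by blast
    hence "x = (\<lambda>k. (b / c) * (c * v k))" using assms by auto
    thus "x \<in> pt (\<lambda>k. c * v k)" unfolding pt_def by blast
  qed
qed

lemma prop_ex:
  fixes x y x' y' :: "'a::field"
  assumes "(x', y') \<noteq> (0, 0)" "x * y' = y * x'"
  shows "\<exists>l. x = l * x' \<and> y = l * y'"
proof (cases "x' = 0")
  case True
  hence "y' \<noteq> 0" using assms by auto
  thus ?thesis using assms True by (intro exI[of _ "y / y'"]) auto
next
  case False
  have "y = (x / x') * y'" using assms(2) False by (simp add: field_simps)
  thus ?thesis using False by (intro exI[of _ "x / x'"]) auto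
qed

lemma pt_rho_eq:
  fixes x y x' y' :: "'a::field"
  assumes "(x', y') \<noteq> (0, 0)" "(x, y) \<noteq> (0, 0)" "x * y' = y * x'"
  shows "pt (rho d e x y) = pt (rho d e x' y')"
proof -
  obtain l where l: "x = l * x'" "y = l * y'" using prop_ex[OF assms(1,3)] by blast
  have "l \<noteq> 0" using l assms(2) by auto
  thus ?thesis using l rho_scale[of d e l x' y'] pt_scale[of "l ^ d"] by simp
qed

lemma pline_pt: "pline (pt u) (pt v) = {(\<lambda>k. a * u k + b * v k) | a b. True}"
proof
  show "pline (pt u) (pt v) \<subseteq> {(\<lambda>k. a * u k + b * v k) | a b. True}"
  proof
    fix z assume "z \<in> pline (pt u) (pt v)"
    then obtain x y where "z = (\<lambda>k. x k + y k)" "x \<in> pt u" "y \<in> pt v" unfolding pline_def by blast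
    then obtain a b where "z = (\<lambda>k. a * u k + b * v k)" unfolding pt_def by blast
    thus "z \<in> {(\<lambda>k. a * u k + b * v k) | a b. True}" by blast
  qed
  show "{(\<lambda>k. a * u k + b * v k) | a b. True} \<subseteq> pline (pt u) (pt v)"
  proof
    fix z assume "z \<in> {(\<lambda>k. a * u k + b * v k) | a b. True}"
    then obtain a b where z: "z = (\<lambda>k. a * u k + b * v k)" by blast
    have "(\<lambda>k. a * u k) \<in> pt u" "(\<lambda>k. b * v k) \<in> pt v" unfolding pt_def by blast+
    thus "z \<in> pline (pt u) (pt v)" unfolding pline_def z mem_Collect_eq
      by (intro exI[of _ "\<lambda>k. a * u k"] exI[of _ "\<lambda>k. b * v k"]) simp
  qed
qed

lemma pline_sub: "pline A B \<subseteq> pline B A"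
proof
  fix z assume "z \<in> pline A B"
  then obtain x y where "z = (\<lambda>k. x k + y k)" "x \<in> A" "y \<in> B" unfolding pline_def by blast
  hence "z = (\<lambda>k. y k + x k)" "y \<in> B" "x \<in> A" by (auto simp: add.commute)
  thus "z \<in> pline B A" unfolding pline_def by blast
qed

lemma pline_comm: "pline A B = pline B A"
  using pline_sub by blast

lemma coef_cr:
  fixes s t s' t' a :: "'a::field"
  assumes d: "1 \<le> d" and nz: "(s, t) \<noteq> (0, 0)"
    and c: "\<forall>i\<le>d. s ^ (d - i) * t ^ i = a * (s' ^ (d - i) * t' ^ i)"
  shows "s * t' = t * s'"
proof (cases "s = 0")
  case False
  have c0: "s ^ d = a * s' ^ d" using c[rule_format, of 0] by simp
  have c1: "s ^ (d - 1) * t = a * (s' ^ (d - 1) * t')" using c[rule_format, of 1] d by simp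
  have "s' \<noteq> 0" using c0 False d by (auto simp: power_0_left)
  have sd: "s ^ d = s ^ (d - 1) * s" "s' ^ d = s' ^ (d - 1) * s'" using d
    by (metis One_nat_def Suc_pred' less_eq_Suc_le power_Suc2)+
  have "s ^ (d - 1) * (t * s') = s ^ (d - 1) * (s * t')"
  proof -
    have "s ^ (d - 1) * (t * s') = a * s' ^ d * t'" using c1 sd(2) by (simp add: algebra_simps)
    also have "\<dots> = s ^ d * t'" using c0 by simp
    finally show ?thesis using sd(1) by (simp add: algebra_simps)
  qed
  hence "t * s' = s * t'" using False by simp
  thus ?thesis by simp
next
  case True
  hence t: "t \<noteq> 0" using nz by auto
  have cd: "t ^ d = a * t' ^ d" using c[rule_format, of d] by simp
  have "a \<noteq> 0" "t' \<noteq> 0" using cd t using d by (auto simp: power_0_left)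
  have "s ^ 1 * t ^ (d - 1) = a * (s' ^ 1 * t' ^ (d - 1))"
    using c[rule_format, of "d - 1"] d by simp
  hence "a * (s' * t' ^ (d - 1)) = 0" using True by simp
  hence "s' = 0" using \<open>a \<noteq> 0\<close> \<open>t' \<noteq> 0\<close> by simp
  thus ?thesis using True by simp
qed

lemma quad3:
  fixes A B C x0 y0 x1 y1 x2 y2 :: "'a::field"
  assumes e0: "A*x0^2 + B*x0*y0 + C*y0^2 = 0" and e1: "A*x1^2 + B*x1*y1 + C*y1^2 = 0"
    and e2: "A*x2^2 + B*x2*y2 + C*y2^2 = 0"
    and n: "x0*y1 - y0*x1 \<noteq> 0" "x0*y2 - y0*x2 \<noteq> 0" "x1*y2-y1*x2 \<noteq> 0"
  shows "A = 0 \<and> B = 0 \<and> C = 0"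
proof -
  define D where "D = (x0*y1 - y0*x1)*(x0*y2 - y0*x2)*(x1*y2-y1*x2)"
  define E0 where "E0 = A*x0^2 + B*x0*y0 + C*y0^2"
  define E1 where "E1 = A*x1^2 + B*x1*y1 + C*y1^2"
  define E2 where "E2 = A*x2^2 + B*x2*y2 + C*y2^2"
  have "A * D = y1*y2*(x1*y2-x2*y1)*E0 - y0*y2*(x0*y2-x2*y0)*E1 + y0*y1*(x0*y1-x1*y0)*E2"
    unfolding D_def E0_def E1_def E2_def by (simp add: power2_eq_square algebra_simps)
  moreover have "B * D = -(x1^2*y2^2-y1^2*x2^2)*E0+(x0^2*y2^2-y0^2*x2^2)*E1-(x0^2*y1^2-y0^2*x1^2)*E2"
    unfolding D_def E0_def E1_def E2_def by (simp add: power2_eq_square algebra_simps)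
  moreover have "C * D = x1*x2*(x1*y2-x2*y1)*E0 - x0*x2*(x0*y2-x2*y0)*E1 + x0*x1*(x0*y1-x1*y0)*E2"
    unfolding D_def E0_def E1_def E2_def by (simp add: power2_eq_square algebra_simps)
  moreover have "E0 = 0" "E1 = 0" "E2 = 0" using e0 e1 e2 by (simp_all add: E0_def E1_def E2_def)
  moreover have "D \<noteq> 0" using n by (simp add: D_def)
  ultimately show ?thesis by simp
qed

lemma par2:
  fixes A C A' C' u v :: "'a::field"
  assumes "(u, v) \<noteq> (0, 0)" "A * v = C * u" "A' * v = C' * u"
  shows "A * C' = C * A'"
proof (cases "u = 0")
  case True
  hence "v \<noteq> 0" using assms by auto
  thus ?thesis using assms True by auto
next
  case False
  have "C = A * v / u" "C' = A' * v / u" using assms False by (auto simp: field_simps)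
  thus ?thesis by simp
qed

lemma GFq_pow:
  assumes "(x::'a::comm_monoid_mult) ^ q = x"
  shows "x ^ (q ^ i) = x"
proof (induction i)
  case (Suc i)
  have "x ^ (q ^ Suc i) = (x ^ q) ^ (q ^ i)" by (simp add: power_mult mult.commute)
  thus ?case using Suc assms by simp
qed simp

definition DSP :: "nat \<Rightarrow> (nat \<Rightarrow> 'm \<Rightarrow> 'a::field) \<Rightarrow> nat \<Rightarrow> (nat \<Rightarrow> 'm \<Rightarrow> 'a) \<Rightarrow> bool" where
  "DSP d1 e d2 f \<longleftrightarrow> (\<forall>a b. (\<forall>k. (\<Sum>i\<le>d1. a i * e i k) + (\<Sum>j\<le>d2. b j * f j k) = 0)
      \<longrightarrow> (\<forall>i\<le>d1. a i = 0) \<and> (\<forall>j\<le>d2. b j = 0))"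

lemma DSP_swap:
  assumes DS: "DSP d1 e d2 f" shows "DSP d2 f d1 e"
  unfolding DSP_def
proof (intro allI impI)
  fix a b
  assume h: "\<forall>k. (\<Sum>i\<le>d2. a i * f i k) + (\<Sum>j\<le>d1. b j * e j k) = 0"
  hence "\<forall>k. (\<Sum>i\<le>d1. b i * e i k) + (\<Sum>j\<le>d2. a j * f j k) = 0" by (simp add: add.commute)
  hence "(\<forall>i\<le>d1. b i = 0) \<and> (\<forall>j\<le>d2. a j = 0)"
    using mp[OF spec[OF spec[OF DS[unfolded DSP_def], of b], of a]] by blast
  thus "(\<forall>i\<le>d2. a i = 0) \<and> (\<forall>j\<le>d1. b j = 0)" by blast
qed

lemma line_coef:
  fixes e f :: "nat \<Rightarrow> 'm \<Rightarrow> 'a::field"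
  assumes DS: "DSP d1 e d2 f"
    and eq: "pline (pt (\<lambda>k. \<Sum>i\<le>d1. a i * e i k)) (pt (\<lambda>k. \<Sum>j\<le>d2. b j * f j k))
           = pline (pt (\<lambda>k. \<Sum>i\<le>d1. a' i * e i k)) (pt (\<lambda>k. \<Sum>j\<le>d2. b' j * f j k))"
  shows "\<exists>\<alpha>. \<forall>i\<le>d1. a' i = \<alpha> * a i"
proof -
  define u where "u = (\<lambda>k. \<Sum>i\<le>d1. a i * e i k)"
  define v where "v = (\<lambda>k. \<Sum>j\<le>d2. b j * f j k)"
  define u' where "u' = (\<lambda>k. \<Sum>i\<le>d1. a' i * e i k)"
  define v' where "v' = (\<lambda>k. \<Sum>j\<le>d2. b' j * f j k)"
  have "(\<lambda>k. 1 * u' k + 0 * v' k) \<in> pline (pt u') (pt v')" unfolding pline_pt by blast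
  hence "u' \<in> pline (pt u) (pt v)" using eq unfolding u_def v_def u'_def v'_def by simp
  then obtain \<alpha> \<beta> where ab: "u' = (\<lambda>k. \<alpha> * u k + \<beta> * v k)" unfolding pline_pt by blast
  have "\<forall>k. (\<Sum>i\<le>d1. (a' i - \<alpha> * a i) * e i k) + (\<Sum>j\<le>d2. (- \<beta> * b j) * f j k) = 0"
  proof
    fix k
    have "(\<Sum>i\<le>d1. (a' i - \<alpha> * a i) * e i k) = u' k - \<alpha> * u k"
      unfolding u_def u'_def by (simp add: left_diff_distrib sum_subtractf sum_distrib_left mult.assoc)
    moreover have "(\<Sum>j\<le>d2. (- \<beta> * b j) * f j k) = - (\<beta> * v k)"
      unfolding v_def by (simp add: sum_distrib_left sum_negf mult.assoc)
    moreover have "u' k = \<alpha> * u k + \<beta> * v k" using ab by simp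
    ultimately show "(\<Sum>i\<le>d1. (a' i - \<alpha> * a i) * e i k) + (\<Sum>j\<le>d2. (- \<beta> * b j) * f j k) = 0"
      by simp
  qed
  hence "\<forall>i\<le>d1. a' i - \<alpha> * a i = 0"
    using mp[OF spec[OF spec[OF DS[unfolded DSP_def], of "\<lambda>i. a' i - \<alpha> * a i"], of "\<lambda>j. - \<beta> * b j"]] by blast
  thus ?thesis by auto
qed

lemma rho_sum: "rho d e s t = (\<lambda>k. \<Sum>i\<le>d. (s ^ (d - i) * t ^ i) * e i k)"
  unfolding rho_def by simp

lemma line_coef2:
  fixes e f :: "nat \<Rightarrow> 'm \<Rightarrow> 'a::field"
  assumes DS: "DSP d1 e d2 f"
    and eq: "pline (pt (\<lambda>k. \<Sum>i\<le>d1. a i * e i k)) (pt (\<lambda>k. \<Sum>j\<le>d2. b j * f j k))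
           = pline (pt (\<lambda>k. \<Sum>i\<le>d1. a' i * e i k)) (pt (\<lambda>k. \<Sum>j\<le>d2. b' j * f j k))"
  shows "\<exists>\<beta>. \<forall>j\<le>d2. b' j = \<beta> * b j"
proof -
  have "pline (pt (\<lambda>k. \<Sum>j\<le>d2. b j * f j k)) (pt (\<lambda>k. \<Sum>i\<le>d1. a i * e i k))
      = pline (pt (\<lambda>k. \<Sum>i\<le>d1. a i * e i k)) (pt (\<lambda>k. \<Sum>j\<le>d2. b j * f j k))" by (rule pline_comm)
  also have "\<dots> = pline (pt (\<lambda>k. \<Sum>i\<le>d1. a' i * e i k)) (pt (\<lambda>k. \<Sum>j\<le>d2. b' j * f j k))" by (rule eq)
  also have "\<dots> = pline (pt (\<lambda>k. \<Sum>j\<le>d2. b' j * f j k)) (pt (\<lambda>k. \<Sum>i\<le>d1. a' i * e i k))" by (rule pline_comm)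
  finally show ?thesis by (rule line_coef[OF DSP_swap[OF DS]])
qed

lemma mat_nz:
  fixes a b c d s t :: "'a::field"
  assumes "a * d - b * c \<noteq> 0" "(s, t) \<noteq> (0, 0)"
  shows "(a * s + b * t, c * s + d * t) \<noteq> (0, 0)"
proof
  assume h: "(a * s + b * t, c * s + d * t) = (0, 0)"
  hence h1: "a * s + b * t = 0" "c * s + d * t = 0" by auto
  have "(a * d - b * c) * s = d * (a * s + b * t) - b * (c * s + d * t)"
    "(a * d - b * c) * t = a * (c * s + d * t) - c * (a * s + b * t)"
    by (simp_all add: algebra_simps)
  hence "(a * d - b * c) * s = 0" "(a * d - b * c) * t = 0" unfolding h1 by auto
  thus False using assms by auto
qed

lemma scroll_rel:
  fixes e f :: "nat \<Rightarrow> 'm \<Rightarrow> 'a::field"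
  assumes DS: "DSP d1 e d2 f" and d1: "1 \<le> d1" and d2: "1 \<le> d2"
    and X: "(s0, t0) \<noteq> (0, 0)" and det: "a * d - b * c \<noteq> 0" and st: "(s, t) \<noteq> (0, 0)"
    and eq: "pline (pt (rho d1 e s0 t0)) (pt (rho d2 f u0 v0))
           = pline (pt (rho d1 e s t)) (pt (rho d2 f (a*s+b*t) (c*s+d*t)))"
  shows "(a * s0 + b * t0) * v0 = (c * s0 + d * t0) * u0"
proof -
  note eq' = eq[unfolded rho_sum]
  obtain \<alpha> where al: "\<forall>i\<le>d1. s ^ (d1 - i) * t ^ i = \<alpha> * (s0 ^ (d1 - i) * t0 ^ i)"
    using line_coef[OF DS eq'] by blast
  obtain \<beta> where be: "\<forall>j\<le>d2. (a*s+b*t) ^ (d2 - j) * (c*s+d*t) ^ j = \<beta> * (u0 ^ (d2 - j) * v0 ^ j)"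
    using line_coef2[OF DS eq'] by blast
  have c1: "s * t0 = t * s0" by (rule coef_cr[OF d1 st al])
  have c2: "(a*s+b*t) * v0 = (c*s+d*t) * u0" by (rule coef_cr[OF d2 mat_nz[OF det st] be])
  obtain l where l: "s = l * s0" "t = l * t0" using prop_ex[OF X c1] by blast
  have "l \<noteq> 0" using l st by auto
  have "l * ((a * s0 + b * t0) * v0) = l * ((c * s0 + d * t0) * u0)"
    using c2 unfolding l by (simp add: algebra_simps)
  thus ?thesis using \<open>l \<noteq> 0\<close> by simp
qed

lemma frob_pt:
  assumes QC: "Q = CHAR('a::{field,finite}) ^ j"
  shows "(\<lambda>v k. v k ^ Q) ` pt (v :: 'm \<Rightarrow> 'a) = pt (\<lambda>k. v k ^ Q)"
proof
  show "(\<lambda>v k. v k ^ Q) ` pt v \<subseteq> pt (\<lambda>k. v k ^ Q)"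
  proof
    fix x assume "x \<in> (\<lambda>v k. v k ^ Q) ` pt v"
    then obtain c where "x = (\<lambda>k. (c * v k) ^ Q)" unfolding pt_def by blast
    hence "x = (\<lambda>k. c ^ Q * v k ^ Q)" by (simp add: power_mult_distrib)
    thus "x \<in> pt (\<lambda>k. v k ^ Q)" unfolding pt_def by blast
  qed
  show "pt (\<lambda>k. v k ^ Q) \<subseteq> (\<lambda>v k. v k ^ Q) ` pt v"
  proof
    fix x assume "x \<in> pt (\<lambda>k. v k ^ Q)"
    then obtain c where x: "x = (\<lambda>k. c * v k ^ Q)" unfolding pt_def by blast
    obtain c' where c': "c' ^ Q = c" using fr_surj[OF QC] by blast
    have "x = (\<lambda>k. (c' * v k) ^ Q)" using x c' by (simp add: power_mult_distrib)
    moreover have "(\<lambda>k. c' * v k) \<in> pt v" unfolding pt_def by blast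
    ultimately show "x \<in> (\<lambda>v k. v k ^ Q) ` pt v" by (rule image_eqI)
  qed
qed

lemma pow_comm: "((x::'a::comm_monoid_mult) ^ m) ^ n = (x ^ n) ^ m"
  by (simp add: power_mult[symmetric] mult.commute)

lemma rho_frob:
  assumes QC: "Q = CHAR('a::{field,finite}) ^ j"
    and eQ: "\<forall>i\<le>d. \<forall>k. e i k ^ Q = (e i k :: 'a)"
  shows "(\<lambda>k. rho d e s t k ^ Q) = rho d e (s ^ Q) (t ^ Q)"
proof
  fix k
  have "rho d e s t k ^ Q = (\<Sum>i\<le>d. (s ^ (d - i) * t ^ i * e i k) ^ Q)"
    unfolding rho_def by (rule fr_sum[OF QC])
  also have "\<dots> = rho d e (s ^ Q) (t ^ Q) k"
    unfolding rho_def using eQ by (intro sum.cong refl) (simp add: power_mult_distrib pow_comm)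
  finally show "rho d e s t k ^ Q = rho d e (s ^ Q) (t ^ Q) k" .
qed

lemma notext:
  assumes QC: "q ^ jj = CHAR('a::{field,finite}) ^ j"
    and r: "s0 * t0 ^ (q ^ jj) = t0 * (s0 :: 'a) ^ (q ^ jj)" and X: "(s0, t0) \<noteq> (0, 0)"
  shows "pt (rho d e s0 t0) \<in> curve_ext (subfield_pow q jj) d e"
proof (cases "s0 = 0")
  case True
  hence "pt (rho d e s0 t0) = pt (rho d e 0 1)" using X by (intro pt_rho_eq) auto
  moreover have "(0::'a) \<in> subfield_pow q jj" "(1::'a) \<in> subfield_pow q jj"
    using fr_pos[OF QC] by (auto simp: subfield_pow_def power_0_left)
  ultimately show ?thesis unfolding curve_ext_def mem_Collect_eq
    by (intro exI[of _ 0] exI[of _ 1]) simp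
next
  case False
  define r' where "r' = t0 / s0"
  have "s0 ^ (q ^ jj) \<noteq> 0" using False by simp
  hence "r' ^ (q ^ jj) = r'" using r False unfolding r'_def by (simp add: power_divide field_simps)
  hence "r' \<in> subfield_pow q jj" by (simp add: subfield_pow_def)
  moreover have "(1::'a) \<in> subfield_pow q jj" by (simp add: subfield_pow_def)
  moreover have "pt (rho d e s0 t0) = pt (rho d e 1 r')" using X False unfolding r'_def
    by (intro pt_rho_eq) auto
  ultimately show ?thesis unfolding curve_ext_def mem_Collect_eq
    by (intro exI[of _ 1] exI[of _ r']) simp
qed

lemma scroll_sub:
  fixes a b c d a' b' c' d' :: "'a::field"
  assumes eqn: "\<forall>s t. (a*s+b*t)*(c'*s+d'*t) = (c*s+d*t)*(a'*s+b'*t)"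
    and det1: "a * d - b * c \<noteq> 0" and det2: "a' * d' - b' * c' \<noteq> 0"
  shows "{pline (pt (rho d1 e s t)) (pt (rho d2 f (a * s + b * t) (c * s + d * t))) | s t.
               s \<in> UNIV \<and> t \<in> UNIV \<and> (s, t) \<noteq> (0, 0)}
    \<subseteq> {pline (pt (rho d1 e s t)) (pt (rho d2 f (a' * s + b' * t) (c' * s + d' * t))) | s t.
               s \<in> UNIV \<and> t \<in> UNIV \<and> (s, t) \<noteq> (0, 0)}"
proof
  fix x assume "x \<in> {pline (pt (rho d1 e s t)) (pt (rho d2 f (a * s + b * t) (c * s + d * t))) | s t.
               s \<in> UNIV \<and> t \<in> UNIV \<and> (s, t) \<noteq> (0, 0)}"
  then obtain s t where x: "x = pline (pt (rho d1 e s t)) (pt (rho d2 f (a * s + b * t) (c * s + d * t)))"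
    and st: "(s, t) \<noteq> (0, 0)" by blast
  have "pt (rho d2 f (a * s + b * t) (c * s + d * t)) = pt (rho d2 f (a' * s + b' * t) (c' * s + d' * t))"
    using eqn mat_nz[OF det1 st] mat_nz[OF det2 st] by (intro pt_rho_eq) auto
  hence "x = pline (pt (rho d1 e s t)) (pt (rho d2 f (a' * s + b' * t) (c' * s + d' * t)))"
    using x by simp
  thus "x \<in> {pline (pt (rho d1 e s t)) (pt (rho d2 f (a' * s + b' * t) (c' * s + d' * t))) | s t.
               s \<in> UNIV \<and> t \<in> UNIV \<and> (s, t) \<noteq> (0, 0)}" using st by blast
qed

theorem lemma3p4:
  fixes e f :: "nat \<Rightarrow> 'm::finite \<Rightarrow> 'a::{field,finite}"
    and p k q n d1 d2 :: nat
    and P Q :: "('m \<Rightarrow> 'a) set"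
  assumes "prime p" and "k \<ge> 1" and "q = p ^ k" and "n \<ge> 1" and "card (UNIV :: 'a set) = q ^ n"
    and "nrc_data q d1 e" and "nrc_data q d2 f"
    and "span_over (GFq q) d1 e \<inter> span_over (GFq q) d2 f = {(\<lambda>k. 0)}"
    and "P \<in> curve_ext UNIV d1 e - curve_ext (GFq q) d1 e"
    and "Q \<in> curve_ext UNIV d2 f - curve_ext (GFq q) d2 f"
    and "P \<notin> curve_ext (subfield_pow q 2) d1 e"
  shows "(\<forall>S1 S2. good_scroll q d1 e d2 f S1 \<and> pline P Q \<in> S1 \<and>
                  good_scroll q d1 e d2 f S2 \<and> pline P Q \<in> S2 \<longrightarrow> S1 = S2)
       \<and> (\<forall>S. good_scroll q d1 e d2 f S \<and> pline P Q \<in> S \<longrightarrow>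
                (\<forall>i::nat. pline (frob q i P) (frob q i Q) \<in> S))"
proof -
  note A = assms
  have card: "card (UNIV :: 'a set) = p ^ (k * n)" using A(3,5) by (simp add: power_mult)
  have CH: "CHAR('a) = p" by (rule char_eq[OF A(1) card])
  have QC: "q ^ ii = CHAR('a) ^ (k * ii)" for ii using A(3) CH by (simp add: power_mult)
  have qC: "q = CHAR('a) ^ k" using A(3) CH by simp
  have DS: "DSP d1 e d2 f" unfolding DSP_def using direct_sum[OF qC A(6,7,8)] by blast
  have d1: "1 \<le> d1" and d2: "1 \<le> d2" using A(6,7) by (auto simp: nrc_data_def)
  have eQ: "\<forall>i\<le>d1. \<forall>k. e i k ^ (q ^ ii) = e i k" for ii
    using A(6) by (auto simp: nrc_data_def subfield_pow_def intro: GFq_pow)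
  have fQ: "\<forall>i\<le>d2. \<forall>k. f i k ^ (q ^ ii) = f i k" for ii
    using A(7) by (auto simp: nrc_data_def subfield_pow_def intro: GFq_pow)
  obtain s0 t0 where P: "P = pt (rho d1 e s0 t0)" and X: "(s0, t0) \<noteq> (0, 0)"
    using A(9) unfolding curve_ext_def by blast
  obtain u0 v0 where Qd: "Q = pt (rho d2 f u0 v0)" and Y: "(u0, v0) \<noteq> (0, 0)"
    using A(10) unfolding curve_ext_def by blast
  define SC where "SC a b c d = {pline (pt (rho d1 e s t)) (pt (rho d2 f (a * s + b * t) (c * s + d * t))) | s t.
               s \<in> (UNIV::'a set) \<and> t \<in> UNIV \<and> (s, t) \<noteq> (0, 0)}" for a b c d
  have good: "\<exists>a b c d. a ^ q = a \<and> b ^ q = b \<and> c ^ q = c \<and> d ^ q = d \<and> a * d - b * c \<noteq> 0 \<and> S = SC a b c d"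
    if "good_scroll q d1 e d2 f S" for S
    using that unfolding good_scroll_def scroll_over_def SC_def by (simp add: subfield_pow_def)
  have key: "(a * s0^(q^ii) + b * t0^(q^ii)) * v0^(q^ii) = (c * s0^(q^ii) + d * t0^(q^ii)) * u0^(q^ii)"
    if ab: "a ^ q = a" "b ^ q = b" "c ^ q = c" "d ^ q = d" "a * d - b * c \<noteq> 0"
      and mem: "pline P Q \<in> SC a b c d" for a b c d ii
  proof -
    obtain s t where st: "(s, t) \<noteq> (0, 0)"
      and eq: "pline P Q = pline (pt (rho d1 e s t)) (pt (rho d2 f (a*s+b*t) (c*s+d*t)))"
      using mem unfolding SC_def by blast
    have r0: "(a * s0 + b * t0) * v0 = (c * s0 + d * t0) * u0"
      using scroll_rel[OF DS d1 d2 X ab(5) st] eq unfolding P Qd by blast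
    have aQ: "a ^ (q ^ ii) = a" "b ^ (q ^ ii) = b" "c ^ (q ^ ii) = c" "d ^ (q ^ ii) = d"
      using ab by (auto intro: GFq_pow)
    have "((a * s0 + b * t0) * v0) ^ (q ^ ii) = ((c * s0 + d * t0) * u0) ^ (q ^ ii)" using r0 by simp
    thus ?thesis using aQ by (simp add: fr_add[OF QC] power_mult_distrib)
  qed
  have nzQ: "((x::'a) ^ (q ^ ii), (y::'a) ^ (q ^ ii)) \<noteq> (0, 0)" if "(x, y) \<noteq> (0, 0)" for x y ii
    using that fr_zero[OF QC[of ii], of x] fr_zero[OF QC[of ii], of y] by auto
  have part2: "\<forall>S. good_scroll q d1 e d2 f S \<and> pline P Q \<in> S \<longrightarrow>
                (\<forall>i::nat. pline (frob q i P) (frob q i Q) \<in> S)"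
  proof (intro allI impI)
    fix S ii assume h: "good_scroll q d1 e d2 f S \<and> pline P Q \<in> S"
    then obtain a b c d where ab: "a ^ q = a" "b ^ q = b" "c ^ q = c" "d ^ q = d" "a * d - b * c \<noteq> 0"
      and S: "S = SC a b c d" using good by blast
    have kk: "(a * s0^(q^ii) + b * t0^(q^ii)) * v0^(q^ii) = (c * s0^(q^ii) + d * t0^(q^ii)) * u0^(q^ii)"
      using key[OF ab] h S by blast
    have fP: "frob q ii P = pt (rho d1 e (s0^(q^ii)) (t0^(q^ii)))"
      unfolding frob_def P frob_pt[OF QC] rho_frob[OF QC eQ] ..
    have fQ': "frob q ii Q = pt (rho d2 f (u0^(q^ii)) (v0^(q^ii)))"
      unfolding frob_def Qd frob_pt[OF QC] rho_frob[OF QC fQ] ..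
    have Xn: "(s0^(q^ii), t0^(q^ii)) \<noteq> (0, 0)" using nzQ[OF X] .
    have "pt (rho d2 f (a * s0^(q^ii) + b * t0^(q^ii)) (c * s0^(q^ii) + d * t0^(q^ii)))
        = pt (rho d2 f (u0^(q^ii)) (v0^(q^ii)))"
      using nzQ[OF Y] mat_nz[OF ab(5) Xn] kk by (intro pt_rho_eq) auto
    hence "pline (frob q ii P) (frob q ii Q) = pline (pt (rho d1 e (s0^(q^ii)) (t0^(q^ii))))
        (pt (rho d2 f (a * s0^(q^ii) + b * t0^(q^ii)) (c * s0^(q^ii) + d * t0^(q^ii))))"
      unfolding fP fQ' by simp
    thus "pline (frob q ii P) (frob q ii Q) \<in> S" unfolding S SC_def using Xn by blast
  qed
  have part1: "\<forall>S1 S2. good_scroll q d1 e d2 f S1 \<and> pline P Q \<in> S1 \<and>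
                  good_scroll q d1 e d2 f S2 \<and> pline P Q \<in> S2 \<longrightarrow> S1 = S2"
  proof (intro allI impI)
    fix S1 S2 assume h: "good_scroll q d1 e d2 f S1 \<and> pline P Q \<in> S1 \<and>
                  good_scroll q d1 e d2 f S2 \<and> pline P Q \<in> S2"
    then obtain a b c d where ab: "a ^ q = a" "b ^ q = b" "c ^ q = c" "d ^ q = d" "a * d - b * c \<noteq> 0"
      and S1: "S1 = SC a b c d" using good by blast
    obtain a' b' c' d' where ab': "a' ^ q = a'" "b' ^ q = b'" "c' ^ q = c'" "d' ^ q = d'" "a' * d' - b' * c' \<noteq> 0"
      and S2: "S2 = SC a' b' c' d'" using good h by blast
    define x where "x ii = s0 ^ (q ^ ii)" for ii
    define y where "y ii = t0 ^ (q ^ ii)" for ii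
    define u where "u ii = u0 ^ (q ^ ii)" for ii
    define v where "v ii = v0 ^ (q ^ ii)" for ii
    have k1: "(a * x ii + b * y ii) * v ii = (c * x ii + d * y ii) * u ii" for ii
      unfolding x_def y_def u_def v_def using key[OF ab] h S1 by blast
    have k2: "(a' * x ii + b' * y ii) * v ii = (c' * x ii + d' * y ii) * u ii" for ii
      unfolding x_def y_def u_def v_def using key[OF ab'] h S2 by blast
    have Yn: "(u ii, v ii) \<noteq> (0, 0)" for ii unfolding u_def v_def by (rule nzQ[OF Y])
    have par: "(a * x ii + b * y ii) * (c' * x ii + d' * y ii) = (c * x ii + d * y ii) * (a' * x ii + b' * y ii)" for ii
      by (rule par2[OF Yn k1 k2])
    define Aq where "Aq = a * c' - c * a'"
    define Bq where "Bq = a * d' + b * c' - c * b' - d * a'"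
    define Cq where "Cq = b * d' - d * b'"
    have iden: "Aq * X^2 + Bq * X * Y + Cq * Y^2 = (a * X + b * Y) * (c' * X + d' * Y) - (c * X + d * Y) * (a' * X + b' * Y)"
      for X Y unfolding Aq_def Bq_def Cq_def by (simp add: algebra_simps power2_eq_square)
    have quad: "Aq * (x ii)^2 + Bq * x ii * y ii + Cq * (y ii)^2 = 0" for ii
      unfolding iden using par[of ii] by simp
    have x0: "x 0 = s0" "y 0 = t0" by (simp_all add: x_def y_def)
    have n01: "x 0 * y 1 - y 0 * x 1 \<noteq> 0"
    proof
      assume "x 0 * y 1 - y 0 * x 1 = 0"
      hence "s0 * t0 ^ (q ^ 1) = t0 * s0 ^ (q ^ 1)" unfolding x_def y_def by simp
      from notext[OF QC[of 1] this X, of d1 e] have "P \<in> curve_ext (GFq q) d1 e" unfolding P .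
      thus False using A(9) by blast
    qed
    have n02: "x 0 * y 2 - y 0 * x 2 \<noteq> 0"
    proof
      assume "x 0 * y 2 - y 0 * x 2 = 0"
      hence "s0 * t0 ^ (q ^ 2) = t0 * s0 ^ (q ^ 2)" unfolding x_def y_def by simp
      from notext[OF QC[of 2] this X, of d1 e] have "P \<in> curve_ext (subfield_pow q 2) d1 e" unfolding P .
      thus False using A(11) by blast
    qed
    have n12: "x 1 * y 2 - y 1 * x 2 \<noteq> 0"
    proof -
      have pw: "(z ^ q) ^ q = z ^ (q ^ 2)" for z :: 'a
        by (simp add: power_mult[symmetric] power2_eq_square)
      have "(x 0 * y 1 - y 0 * x 1) ^ q = x 1 * y 2 - y 1 * x 2"
        unfolding fr_diff[OF qC] by (simp add: x_def y_def power_mult_distrib pw)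
      moreover have "(x 0 * y 1 - y 0 * x 1) ^ q \<noteq> 0" using n01 fr_zero[OF qC] by simp
      ultimately show ?thesis by simp
    qed
    have "Aq = 0 \<and> Bq = 0 \<and> Cq = 0"
      by (rule quad3[OF quad[of 0] quad[of 1] quad[of 2] n01 n02 n12])
    hence eqn: "\<forall>s t. (a*s+b*t)*(c'*s+d'*t) = (c*s+d*t)*(a'*s+b'*t)"
      using iden by (metis (no_types, lifting) add_0 eq_iff_diff_eq_0 mult_zero_left)
    have eqn': "\<forall>s t. (a'*s+b'*t)*(c*s+d*t) = (c'*s+d'*t)*(a*s+b*t)"
      using eqn by (simp add: mult.commute)
    have "S1 \<subseteq> S2" unfolding S1 S2 SC_def by (rule scroll_sub[OF eqn ab(5) ab'(5)])
    moreover have "S2 \<subseteq> S1" unfolding S1 S2 SC_def by (rule scroll_sub[OF eqn' ab'(5) ab(5)])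
    ultimately show "S1 = S2" by blast
  qed
  show ?thesis using part1 part2 by blast
qed

end
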